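(* Let $n\ge2$ and $k\in\{2,\dots,n\}$. Then $$\Lambda_n+(-1)^k\sum_{\pi\in\mathcal M_n^k}\pi(\Lambda_n)\equiv0\pmod{R(n)}.$$
   Context: An $n$-graph is an oriented graph with vertex set $\{1,\dots,n\}$, without loops but possibly with multiple edges; $\mathcal G(n)$ is the set of $n$-graphs and $\mathbb F\mathcal G(n)$ the vector space over a field $\mathbb F$ (characteristic $0$) with basis $\mathcal G(n)$. $R(n)$ is the subspace spanned by: (i) every $\Gamma$ containing a cycle of its underlying unoriented multigraph (two edges joining the same two vertices count as a cycle); (ii) every sum $\sum_{e\in C}\Gamma\setminus e$ with $C\subset E(\Gamma)$ an oriented cycle and $\Gamma\setminus e$ the graph with $e$ removed. $\equiv$ means equality in $\mathbb F\mathcal G(n)/R(n)$. $\Lambda_n$ is the $n$-graph with edges $1\to2,\dots,(n-1)\to n$. For $\sigma\in S_n$, $\sigma(\Gamma)$ is $\Gamma$ with vertex $i$ relabeled $\sigma(i)$ (edge $i\to j$ becomes $\sigma(i)\to\sigma(j)$). A permutation $\pi\in S_n$ is monotone if for each $i$ either $\pi(j)<\pi(i)$ for all $j<i$ or $\pi(j)>\pi(i)$ for all $j<i$; $\mathcal M_n^k$ is the set of monotone permutations with $\pi(1)=k$. *)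

theory Defs
  imports Main HOL.Modules "HOL-Library.Multiset" "HOL-Library.Function_Algebras"
    "HOL-Combinatorics.Permutations"
begin

text \<open>A graph is a multiset of oriented edges (i,j), meaning i \<rightarrow> j.\<close>
type_synonym graph = "(nat \<times> nat) multiset"

definition is_ngraph :: "nat \<Rightarrow> graph \<Rightarrow> bool" where
  "is_ngraph n G \<longleftrightarrow> (\<forall>e \<in># G. fst e \<in> {1..n} \<and> snd e \<in> {1..n} \<and> fst e \<noteq> snd e)"

text \<open>The underlying unoriented multigraph contains a cycle: either two edges join
  the same two vertices, or there is a cycle through at least three distinct vertices.\<close>
definition has_ucycle :: "graph \<Rightarrow> bool" where
  "has_ucycle G \<longleftrightarrow>
     (\<exists>i j. count G (i, j) + count G (j, i) \<ge> 2) \<or>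
     (\<exists>vs. distinct vs \<and> length vs \<ge> 3 \<and>
        (\<forall>i < length vs. (vs ! i, vs ! ((i + 1) mod length vs)) \<in># G \<or>
                         (vs ! ((i + 1) mod length vs), vs ! i) \<in># G))"

definition is_ocycle :: "(nat \<times> nat) set \<Rightarrow> bool" where
  "is_ocycle C \<longleftrightarrow> (\<exists>vs. distinct vs \<and> length vs \<ge> 2 \<and>
      C = {(vs ! i, vs ! ((i + 1) mod length vs)) | i. i < length vs})"

text \<open>Basis vector of a graph in the free vector space (finitely supported functions).\<close>
definition gvec :: "graph \<Rightarrow> graph \<Rightarrow> 'a::field" where
  "gvec G = (\<lambda>H. if H = G then 1 else 0)"

definition smul :: "'a::field \<Rightarrow> (graph \<Rightarrow> 'a) \<Rightarrow> graph \<Rightarrow> 'a" where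
  "smul c v = (\<lambda>H. c * v H)"

definition Rgens :: "nat \<Rightarrow> (graph \<Rightarrow> 'a::field) set" where
  "Rgens n =
     {gvec G | G. is_ngraph n G \<and> has_ucycle G} \<union>
     {(\<Sum>e\<in>C. gvec (G - {#e#})) | G C. is_ngraph n G \<and> is_ocycle C \<and> C \<subseteq> set_mset G}"

definition Rspace :: "nat \<Rightarrow> (graph \<Rightarrow> 'a::field) set" where
  "Rspace n = module.span smul (Rgens n)"

definition Lambda :: "nat \<Rightarrow> graph" where
  "Lambda n = mset (map (\<lambda>i. (i, Suc i)) [1..<n])"

definition relabel :: "(nat \<Rightarrow> nat) \<Rightarrow> graph \<Rightarrow> graph" where
  "relabel \<sigma> G = image_mset (\<lambda>(i, j). (\<sigma> i, \<sigma> j)) G"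

definition monotone_perm :: "nat \<Rightarrow> (nat \<Rightarrow> nat) \<Rightarrow> bool" where
  "monotone_perm n \<pi> \<longleftrightarrow> \<pi> permutes {1..n} \<and>
     (\<forall>i \<in> {1..n}. (\<forall>j \<in> {1..<i}. \<pi> j < \<pi> i) \<or> (\<forall>j \<in> {1..<i}. \<pi> j > \<pi> i))"

definition Mnk :: "nat \<Rightarrow> nat \<Rightarrow> (nat \<Rightarrow> nat) set" where
  "Mnk n k = {\<pi>. monotone_perm n \<pi> \<and> \<pi> 1 = k}"

end

theory Submission
  imports Defs
begin


lemma smul_module: "module (smul :: 'a::field \<Rightarrow> (graph \<Rightarrow> 'a) \<Rightarrow> graph \<Rightarrow> 'a)"
  by unfold_locales (simp_all add: smul_def fun_eq_iff algebra_simps)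

lemma R_add: "x \<in> Rspace n \<Longrightarrow> y \<in> Rspace n \<Longrightarrow> x + y \<in> Rspace n"
  unfolding Rspace_def by (rule module.span_add[OF smul_module])
lemma R_diff: "x \<in> Rspace n \<Longrightarrow> y \<in> Rspace n \<Longrightarrow> x - y \<in> Rspace n"
  unfolding Rspace_def by (rule module.span_diff[OF smul_module])
lemma R_smul: "x \<in> Rspace n \<Longrightarrow> smul c x \<in> Rspace n"
  unfolding Rspace_def by (rule module.span_scale[OF smul_module])
lemma R_zero: "0 \<in> Rspace n"
  unfolding Rspace_def by (rule module.span_zero[OF smul_module])
lemma R_gen: "x \<in> Rgens n \<Longrightarrow> x \<in> Rspace n"
  unfolding Rspace_def by (rule module.span_base[OF smul_module])

lemma ng_add_mset[simp]: "is_ngraph n (add_mset e G) \<longleftrightarrow>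
   fst e \<in> {1..n} \<and> snd e \<in> {1..n} \<and> fst e \<noteq> snd e \<and> is_ngraph n G"
  by (auto simp: is_ngraph_def)
lemma ng_plus[simp]: "is_ngraph n (A + B) \<longleftrightarrow> is_ngraph n A \<and> is_ngraph n B"
  by (auto simp: is_ngraph_def)
lemma ng_empty[simp]: "is_ngraph n {#}"
  by (auto simp: is_ngraph_def)

fun gpath :: "nat list \<Rightarrow> graph" where
  "gpath (x # y # ys) = add_mset (x, y) (gpath (y # ys))"
| "gpath _ = {#}"

lemma ng_path: "distinct xs \<Longrightarrow> set xs \<subseteq> {1..n} \<Longrightarrow> is_ngraph n (gpath xs)"
  by (induction xs rule: gpath.induct) auto

lemma gpath_snoc: "xs \<noteq> [] \<Longrightarrow> gpath (xs @ [y]) = add_mset (last xs, y) (gpath xs)"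
  by (induction xs rule: gpath.induct) auto

lemma gpath_append: "gpath (xs @ y # ys) = gpath (xs @ [y]) + gpath (y # ys)"
  by (induction xs rule: gpath.induct) auto

lemma relabel_gpath: "relabel p (gpath xs) = gpath (map p xs)"
  by (induction xs rule: gpath.induct) (auto simp: relabel_def)

lemma less2: "{f m | m::nat. m < 2} = {f 0, f 1}"
  by (auto simp: less_Suc_eq numeral_2_eq_2)
lemma less3: "{f m | m::nat. m < 3} = {f 0, f 1, f 2}"
  by (auto simp: less_Suc_eq numeral_3_eq_3) (metis One_nat_def Suc_1)+

lemma rev_rel:
  assumes "is_ngraph n G" "i \<in> {1..n}" "j \<in> {1..n}" "i \<noteq> j"
  shows "(gvec (add_mset (i,j) G) + gvec (add_mset (j,i) G) :: graph \<Rightarrow> 'a::field) \<in> Rspace n"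
proof -
  let ?G = "add_mset (i,j) (add_mset (j,i) G)"
  have oc: "is_ocycle {(i,j),(j,i)}"
    unfolding is_ocycle_def
    apply (rule exI[of _ "[i,j]"])
    using assms by (auto simp: setcompr_eq_image lessThan_def[symmetric] lessThan_Suc)
  have "(\<Sum>e\<in>{(i,j),(j,i)}. gvec (?G - {#e#})) = (gvec (add_mset (i,j) G) + gvec (add_mset (j,i) G) :: graph \<Rightarrow> 'a)"
    using assms(4) by (simp add: add_mset_commute add.commute)
  moreover have "(\<Sum>e\<in>{(i,j),(j,i)}. gvec (?G - {#e#})) \<in> (Rgens n :: (graph \<Rightarrow> 'a) set)"
    unfolding Rgens_def apply (rule UnI2) apply (rule CollectI)
    apply (rule exI[of _ ?G]) apply (rule exI[of _ "{(i,j),(j,i)}"])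
    using assms oc by auto
  ultimately show ?thesis using R_gen by metis
qed

lemma tri_rel:
  assumes "is_ngraph n G" "a \<in> {1..n}" "b \<in> {1..n}" "c \<in> {1..n}" "a \<noteq> b" "b \<noteq> c" "a \<noteq> c"
  shows "(gvec (add_mset (b,c) (add_mset (c,a) G)) + gvec (add_mset (a,b) (add_mset (c,a) G))
          + gvec (add_mset (a,b) (add_mset (b,c) G)) :: graph \<Rightarrow> 'a::field) \<in> Rspace n"
proof -
  let ?G = "add_mset (a,b) (add_mset (b,c) (add_mset (c,a) G))"
  have oc: "is_ocycle {(a,b),(b,c),(c,a)}"
    unfolding is_ocycle_def
    apply (rule exI[of _ "[a,b,c]"])
    using assms by (auto simp: setcompr_eq_image lessThan_def[symmetric] lessThan_Suc)
  have "(\<Sum>e\<in>{(a,b),(b,c),(c,a)}. gvec (?G - {#e#})) = (gvec (add_mset (b,c) (add_mset (c,a) G)) + gvec (add_mset (a,b) (add_mset (c,a) G))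
          + gvec (add_mset (a,b) (add_mset (b,c) G)) :: graph \<Rightarrow> 'a)"
    using assms(5-7) by (simp add: add_mset_commute add.assoc)
  moreover have "(\<Sum>e\<in>{(a,b),(b,c),(c,a)}. gvec (?G - {#e#})) \<in> (Rgens n :: (graph \<Rightarrow> 'a) set)"
    unfolding Rgens_def apply (rule UnI2) apply (rule CollectI)
    apply (rule exI[of _ ?G]) apply (rule exI[of _ "{(a,b),(b,c),(c,a)}"])
    using assms oc by auto
  ultimately show ?thesis using R_gen by metis
qed



lemma path_rev_rel:
  assumes "is_ngraph n G" "distinct xs" "set xs \<subseteq> {1..n}"
  shows "(gvec (G + gpath xs) - smul ((-1)^(length xs - 1)) (gvec (G + gpath (rev xs)))
          :: graph \<Rightarrow> 'a::field) \<in> Rspace n"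
  using assms
proof (induction xs arbitrary: G rule: gpath.induct)
  case (1 x y ys)
  let ?P = "gpath (rev (y#ys))"
  let ?s = "(-1::'a)^(length (y#ys) - 1)"
  have IH: "(gvec (add_mset (x,y) G + gpath (y#ys)) - smul ?s (gvec (add_mset (x,y) G + ?P))
          :: graph \<Rightarrow> 'a) \<in> Rspace n"
    by (rule "1.IH") (use "1.prems" in auto)
  have ngP: "is_ngraph n (G + ?P)"
    using "1.prems" by (auto intro!: ng_path)
  have rv: "(gvec (add_mset (x,y) (G + ?P)) + gvec (add_mset (y,x) (G + ?P)) :: graph \<Rightarrow> 'a) \<in> Rspace n"
    using rev_rel[OF ngP, of x y] "1.prems" by auto
  have e: "gpath (rev (x#y#ys)) = add_mset (y,x) ?P"
    using gpath_snoc[of "rev (y#ys)" x] by simp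
  have "(gvec (G + gpath (x#y#ys)) - smul ((-1)^(length (x#y#ys) - 1)) (gvec (G + gpath (rev (x#y#ys))))
          :: graph \<Rightarrow> 'a) = (gvec (add_mset (x,y) G + gpath (y#ys)) - smul ?s (gvec (add_mset (x,y) G + ?P)))
        + smul ?s (gvec (add_mset (x,y) (G + ?P)) + gvec (add_mset (y,x) (G + ?P)))"
    unfolding e by (simp add: fun_eq_iff smul_def algebra_simps)
  then show ?case using IH rv R_add R_smul by metis
qed (simp_all add: smul_def R_zero)

lemma sum_shuffles_split:
  assumes "l \<noteq> p"
  shows "(\<Sum>s\<in>shuffles (l#L) (p#R). f s) =
    (\<Sum>s\<in>shuffles L (p#R). f (l#s)) + (\<Sum>s\<in>shuffles (l#L) R. f (p#s))"
proof -
  have "(\<Sum>s\<in>shuffles (l#L) (p#R). f s) =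
     (\<Sum>s\<in>(#) l ` shuffles L (p#R). f s) + (\<Sum>s\<in>(#) p ` shuffles (l#L) R. f s)"
    using assms by (simp only: shuffles.simps, intro sum.union_disjoint) auto
  also have "\<dots> = (\<Sum>s\<in>shuffles L (p#R). f (l#s)) + (\<Sum>s\<in>shuffles (l#L) R. f (p#s))"
    by (simp add: sum.reindex)
  finally show ?thesis .
qed

lemma shuffle_rel:
  assumes "is_ngraph n G" "distinct (r#L@R)" "set (r#L@R) \<subseteq> {1..n}"
  shows "(gvec (G + gpath (r#L) + gpath (r#R)) - (\<Sum>s\<in>shuffles L R. gvec (G + gpath (r#s)))
          :: graph \<Rightarrow> 'a::field) \<in> Rspace n"
  using assms
proof (induction "length L + length R" arbitrary: G r L R rule: less_induct)
  case less
  show ?case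
  proof (cases L)
    case Nil
    then show ?thesis by (simp add: R_zero)
  next
    case (Cons l L')
    show ?thesis
    proof (cases R)
      case Nil
      then show ?thesis by (simp add: R_zero)
    next
      case (Cons p R')
      note LR = \<open>L = l # L'\<close> \<open>R = p # R'\<close>
      let ?H = "G + gpath (l#L') + gpath (p#R')"
      have ngH: "is_ngraph n ?H" using less.prems LR by (auto intro!: ng_path)
      have rng: "r \<in> {1..n}" "l \<in> {1..n}" "p \<in> {1..n}" "r \<noteq> l" "r \<noteq> p" "l \<noteq> p"
        using less.prems LR by auto
      define T where "T = (gvec (add_mset (r,p) (add_mset (r,l) ?H)) :: graph \<Rightarrow> 'a)"
      define b1 where "b1 = (gvec (add_mset (p,r) (add_mset (r,l) ?H)) :: graph \<Rightarrow> 'a)"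
      define A where "A = (gvec (add_mset (l,p) (add_mset (p,r) ?H)) :: graph \<Rightarrow> 'a)"
      define B where "B = (gvec (add_mset (r,l) (add_mset (l,p) ?H)) :: graph \<Rightarrow> 'a)"
      define C where "C = (gvec (add_mset (r,p) (add_mset (l,p) ?H)) :: graph \<Rightarrow> 'a)"
      define D where "D = (gvec (add_mset (p,l) (add_mset (r,p) ?H)) :: graph \<Rightarrow> 'a)"
      define S1 where "S1 = (\<Sum>s\<in>shuffles (l#L') R'. gvec (add_mset (r,p) G + gpath (p#s)) :: graph \<Rightarrow> 'a)"
      define S2 where "S2 = (\<Sum>s\<in>shuffles L' (p#R'). gvec (add_mset (r,l) G + gpath (l#s)) :: graph \<Rightarrow> 'a)"
      have rel1: "T + b1 \<in> Rspace n"
        unfolding T_def b1_def using rev_rel[of n "add_mset (r,l) ?H" r p] ngH rng by auto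
      have rel2: "A + b1 + B \<in> Rspace n"
        unfolding A_def b1_def B_def using tri_rel[of n ?H r l p] ngH rng
        by (simp add: add_mset_commute)
      have rel3: "A + C \<in> Rspace n"
        unfolding A_def C_def using rev_rel[of n "add_mset (l,p) ?H" p r] ngH rng
        by (simp add: add_mset_commute)
      have rel4: "C + D \<in> Rspace n"
        unfolding C_def D_def using rev_rel[of n "add_mset (r,p) ?H" l p] ngH rng
        by (simp add: add_mset_commute)
      have IH1: "D - S1 \<in> Rspace n"
      proof -
        have "(gvec (add_mset (r,p) G + gpath (p#(l#L')) + gpath (p#R')) - S1) \<in> Rspace n"
          unfolding S1_def
          apply (rule less.hyps)
          using less.prems LR by auto
        moreover have "add_mset (r,p) G + gpath (p#(l#L')) + gpath (p#R') = add_mset (p,l) (add_mset (r,p) ?H)"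
          by (simp add: add_mset_commute)
        ultimately show ?thesis unfolding D_def by (simp only:)
      qed
      have IH2: "B - S2 \<in> Rspace n"
      proof -
        have "(gvec (add_mset (r,l) G + gpath (l#L') + gpath (l#(p#R'))) - S2) \<in> Rspace n"
          unfolding S2_def
          apply (rule less.hyps)
          using less.prems LR by auto
        moreover have "add_mset (r,l) G + gpath (l#L') + gpath (l#(p#R')) = add_mset (r,l) (add_mset (l,p) ?H)"
          by (simp add: add_mset_commute)
        ultimately show ?thesis unfolding B_def by (simp only:)
      qed
      have sumeq: "(\<Sum>s\<in>shuffles L R. gvec (G + gpath (r#s))) = S2 + S1"
        unfolding LR S1_def S2_def sum_shuffles_split[OF rng(6)]
        by simp
      have Teq: "gvec (G + gpath (r#L) + gpath (r#R)) = T"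
        unfolding T_def LR by (simp add: add_mset_commute)
      have "T - (S2 + S1) = (T + b1) - (A + b1 + B) + (A + C) - (C + D) + (D - S1) + (B - S2)"
        by (simp add: algebra_simps)
      then have "T - (S2 + S1) \<in> Rspace n"
        using rel1 rel2 rel3 rel4 IH1 IH2 by (metis R_add R_diff)
      then show ?thesis using sumeq Teq by simp
    qed
  qed
qed



declare upt_Suc[simp del]

lemma filter_sorted_pos:
  "sorted_wrt Q (filter P xs) \<Longrightarrow> sorted_wrt (\<lambda>a b. P a \<longrightarrow> P b \<longrightarrow> Q a b) xs"
  by (induction xs) (auto split: if_splits)

lemma strict_unique:
  fixes xs ys :: "nat list"
  shows "sorted_wrt (<) xs \<Longrightarrow> sorted_wrt (<) ys \<Longrightarrow> set xs = set ys \<Longrightarrow> xs = ys"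
  using sorted_distinct_set_unique strict_sorted_iff by metis

lemma fwd:
  assumes "p \<in> Mnk n k" "1 \<le> k" "k \<le> n"
  shows "map p [2..<Suc n] \<in> shuffles (rev [1..<k]) [Suc k..<Suc n]"
proof -
  from assms have perm: "p permutes {1..n}"
    and mono: "\<forall>i\<in>{1..n}. (\<forall>j\<in>{1..<i}. p j < p i) \<or> (\<forall>j\<in>{1..<i}. p j > p i)"
    and pk: "p 1 = k" by (auto simp: Mnk_def monotone_perm_def)
  define s where "s = map p [2..<Suc n]"
  have inj: "inj_on p {1..n}" using perm permutes_inj_on by blast
  have img: "p ` {1..n} = {1..n}" using perm permutes_image by blast
  have "inj_on p {2..<Suc n}" by (rule inj_on_subset[OF inj]) auto
  then have dist: "distinct s" unfolding s_def by (metis distinct_map distinct_upt set_upt)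
  have e1: "{1..n} = insert 1 {2..<Suc n}" using assms by auto
  have sets: "set s = {1..n} - {k}"
  proof -
    have "p ` {1..n} = insert k (p ` {2..<Suc n})" using e1 pk by simp
    moreover have "k \<notin> p ` {2..<Suc n}"
    proof
      assume "k \<in> p ` {2..<Suc n}"
      then obtain x where "x \<in> {2..<Suc n}" "p x = k" by auto
      moreover have "x \<in> {1..n}" "(1::nat) \<in> {1..n}" using \<open>x \<in> {2..<Suc n}\<close> assms by auto
      ultimately have "x = 1" using inj pk unfolding inj_on_def by metis
      then show False using \<open>x \<in> {2..<Suc n}\<close> by simp
    qed
    moreover have "set s = p ` {2..<Suc n}" by (simp only: s_def set_map set_upt)
    ultimately show ?thesis using img by blast
  qed
  have srt: "sorted_wrt (\<lambda>a b. (k < b \<longrightarrow> a < b) \<and> (b < k \<longrightarrow> b < a)) s"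
    unfolding sorted_wrt_iff_nth_less
  proof (intro allI impI)
    fix i j assume ij: "i < j" "j < length s"
    then have j: "j + 2 \<in> {1..n}" unfolding s_def by auto
    have sj: "s ! j = p (j + 2)" "s ! i = p (i + 2)" using ij unfolding s_def by auto
    have m: "(\<forall>j'\<in>{1..<j+2}. p j' < p (j+2)) \<or> (\<forall>j'\<in>{1..<j+2}. p j' > p (j+2))"
      using mono j by blast
    have i1: "1 \<in> {1..<j+2}" "i + 2 \<in> {1..<j+2}" using ij by auto
    show "(k < s ! j \<longrightarrow> s ! i < s ! j) \<and> (s ! j < k \<longrightarrow> s ! j < s ! i)"
    proof (intro conjI impI)
      assume "k < s ! j"
      have "\<not> (\<forall>j'\<in>{1..<j+2}. p j' > p (j+2))"
      proof
        assume "\<forall>j'\<in>{1..<j+2}. p j' > p (j+2)"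
        then have "p 1 > p (j+2)" using i1(1) by blast
        then show False using pk sj \<open>k < s ! j\<close> by simp
      qed
      then show "s ! i < s ! j" using m i1 sj by auto
    next
      assume "s ! j < k"
      have "\<not> (\<forall>j'\<in>{1..<j+2}. p j' < p (j+2))"
      proof
        assume "\<forall>j'\<in>{1..<j+2}. p j' < p (j+2)"
        then have "p 1 < p (j+2)" using i1(1) by blast
        then show False using pk sj \<open>s ! j < k\<close> by simp
      qed
      then show "s ! j < s ! i" using m i1 sj by auto
    qed
  qed
  have f1: "filter (\<lambda>x. x < k) s = rev [1..<k]"
  proof -
    have a1: "sorted_wrt (\<lambda>a b. (k < b \<longrightarrow> a < b) \<and> (b < k \<longrightarrow> b < a)) (filter (\<lambda>x. x < k) s)"
      using srt by (rule sorted_wrt_filter)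
    have a2: "sorted_wrt (\<lambda>a b. b < a) (filter (\<lambda>x. x < k) s)"
      by (rule sorted_wrt_mono_rel[OF _ a1]) simp
    have a3: "sorted_wrt (<) (rev (filter (\<lambda>x. x < k) s))" using a2 by (simp only: sorted_wrt_rev)
    have a4: "set (rev (filter (\<lambda>x. x < k) s)) = set [1..<k]"
    proof -
      have "set (rev (filter (\<lambda>x. x < k) s)) = {x \<in> set s. x < k}" by simp
      also have "\<dots> = {1..<k}" using sets \<open>k \<le> n\<close> unfolding set_eq_iff by (simp, linarith)
      finally show ?thesis by simp
    qed
    have "rev (filter (\<lambda>x. x < k) s) = [1..<k]" by (rule strict_unique[OF a3 sorted_wrt_upt a4])
    then show ?thesis by (metis rev_rev_ident)
  qed
  have f2: "filter (\<lambda>x. \<not> x < k) s = [Suc k..<Suc n]"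
  proof -
    have a1: "sorted_wrt (\<lambda>a b. (k < b \<longrightarrow> a < b) \<and> (b < k \<longrightarrow> b < a)) (filter (\<lambda>x. \<not> x < k) s)"
      using srt by (rule sorted_wrt_filter)
    have kn: "k \<notin> set s" using sets by simp
    have a3: "sorted_wrt (<) (filter (\<lambda>x. \<not> x < k) s)"
      by (rule sorted_wrt_mono_rel[OF _ a1]) (use kn in force)
    have a4: "set (filter (\<lambda>x. \<not> x < k) s) = set [Suc k..<Suc n]"
    proof -
      have "set (filter (\<lambda>x. \<not> x < k) s) = {x \<in> set s. \<not> x < k}" by simp
      also have "\<dots> = {Suc k..<Suc n}" using sets \<open>k \<le> n\<close> unfolding set_eq_iff by (simp, linarith)
      finally show ?thesis by simp
    qed
    show ?thesis by (rule strict_unique[OF a3 sorted_wrt_upt a4])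
  qed
  show ?thesis using partition_in_shuffles[of s "\<lambda>x. x < k"] f1 f2 unfolding s_def by simp
qed



lemma bwd:
  assumes sh: "s \<in> shuffles (rev [1..<k]) [Suc k..<Suc n]" and k: "1 \<le> k" "k \<le> n"
  shows "\<exists>p\<in>Mnk n k. map p [2..<Suc n] = s"
proof -
  define xs where "xs = k # s"
  define p where "p x = (if x \<in> {1..n} then xs ! (x - 1) else x)" for x
  have len: "length s = n - 1" using length_shuffles[OF sh] k by simp
  have lxs: "length xs = n" using len k unfolding xs_def by simp
  have sets: "set s = {1..<k} \<union> {Suc k..<Suc n}" using set_shuffles[OF sh] by simp
  have dist: "distinct s" by (rule distinct_disjoint_shuffles[OF _ _ _ sh]) auto
  have "k \<notin> {1..<k} \<union> {Suc k..<Suc n}" by simp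
  then have dxs: "distinct xs" unfolding xs_def using dist sets by simp
  have sxs: "set xs = {1..n}" unfolding xs_def using sets k unfolding set_eq_iff by (simp, linarith)
  have inj: "inj_on p {1..n}"
  proof (rule inj_onI)
    fix x y assume xy: "x \<in> {1..n}" "y \<in> {1..n}" "p x = p y"
    then have "xs ! (x - 1) = xs ! (y - 1)" unfolding p_def by simp
    then have "x - 1 = y - 1" using nth_eq_iff_index_eq[OF dxs] xy lxs by auto
    then show "x = y" using xy by auto
  qed
  have sub: "p ` {1..n} \<subseteq> {1..n}"
  proof
    fix y assume "y \<in> p ` {1..n}"
    then obtain x where x: "x \<in> {1..n}" "y = p x" by auto
    then have "y = xs ! (x - 1)" unfolding p_def by simp
    moreover have "x - 1 < length xs" using x lxs by auto
    ultimately show "y \<in> {1..n}" using sxs nth_mem by metis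
  qed
  have perm: "p permutes {1..n}"
  proof (rule bij_imp_permutes)
    show "bij_betw p {1..n} {1..n}" unfolding bij_betw_def using inj endo_inj_surj[OF _ sub inj] by simp
    show "\<And>x. x \<notin> {1..n} \<Longrightarrow> p x = x" unfolding p_def by auto
  qed
  have p1: "p 1 = k" unfolding p_def xs_def using k by simp
  have pi: "p (Suc (Suc i)) = s ! i" if "i < n - 1" for i
    unfolding p_def xs_def using that by auto
  have ms: "map p [2..<Suc n] = s"
    by (rule nth_equalityI) (simp_all add: len pi add.commute)
  have L: "sorted_wrt (\<lambda>a b. a < k \<longrightarrow> b < k \<longrightarrow> b < a) s"
  proof -
    have "filter (\<lambda>x. x \<in> set (rev [1..<k])) s = rev [1..<k]"
      by (rule filter_shuffles_disjoint1(1)[OF _ sh]) auto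
    moreover have "sorted_wrt (\<lambda>a b. b < a) (rev [1..<k])" by (simp add: sorted_wrt_rev)
    ultimately have "sorted_wrt (\<lambda>a b. b < a) (filter (\<lambda>x. x \<in> set (rev [1..<k])) s)" by simp
    from filter_sorted_pos[OF this] show ?thesis
      apply (rule sorted_wrt_mono_rel[rotated])
      apply (subgoal_tac "x \<in> {1..<k} \<union> {Suc k..<Suc n}" "y \<in> {1..<k} \<union> {Suc k..<Suc n}")
      using sets apply auto
      done
  qed
  have R: "sorted_wrt (\<lambda>a b. k < a \<longrightarrow> k < b \<longrightarrow> a < b) s"
  proof -
    have "filter (\<lambda>x. x \<notin> set (rev [1..<k])) s = [Suc k..<Suc n]"
      by (rule filter_shuffles_disjoint1(2)[OF _ sh]) auto
    moreover have "sorted_wrt (<) [Suc k..<Suc n]" by simp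
    ultimately have "sorted_wrt (<) (filter (\<lambda>x. x \<notin> set (rev [1..<k])) s)" by simp
    from filter_sorted_pos[OF this] show ?thesis
      apply (rule sorted_wrt_mono_rel[rotated])
      apply (subgoal_tac "x \<in> {1..<k} \<union> {Suc k..<Suc n}" "y \<in> {1..<k} \<union> {Suc k..<Suc n}")
      using sets apply auto
      done
  qed
  have mono: "(\<forall>j\<in>{1..<i}. p j < p i) \<or> (\<forall>j\<in>{1..<i}. p j > p i)" if i: "i \<in> {1..n}" for i
  proof (cases "i = 1")
    case True then show ?thesis by simp
  next
    case False
    define i' where "i' = i - 2"
    have i': "i = i' + 2" "i' < n - 1" using i False unfolding i'_def by auto
    have pi': "p i = s ! i'" using pi i' by simp
    have si: "s ! i' \<in> set s" using i' len by simp
    have pj: "p j = k \<or> (\<exists>j'<i'. p j = s ! j')" if "j \<in> {1..<i}" for j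
    proof (cases "j = 1")
      case True then show ?thesis using p1 by simp
    next
      case False
      define j' where "j' = j - 2"
      have j': "j = Suc (Suc j')" "j' < i'" using that False i' unfolding j'_def by auto
      then have "p j = s ! j'" using pi i' by simp
      then show ?thesis using j' by blast
    qed
    show ?thesis
    proof (cases "k < s ! i'")
      case True
      have "p j < p i" if "j \<in> {1..<i}" for j
      proof -
        from pj[OF that] show ?thesis
        proof
          assume "p j = k" then show ?thesis using True pi' by simp
        next
          assume "\<exists>j'<i'. p j = s ! j'"
          then obtain j' where j': "j' < i'" "p j = s ! j'" by auto
          have sj: "s ! j' \<in> set s" using j' i' len by simp
          show ?thesis
          proof (cases "s ! j' < k")
            case True then show ?thesis using \<open>k < s ! i'\<close> j' pi' by simp
          next
            case False
            then have "k < s ! j'" using sj sets by (subgoal_tac "s ! j' \<in> {1..<k} \<union> {Suc k..<Suc n}") auto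
            moreover have "i' < length s" using i' len by simp
            ultimately show ?thesis using R[unfolded sorted_wrt_iff_nth_less, rule_format, of j' i'] j' True pi'
              by simp
          qed
        qed
      qed
      then show ?thesis by blast
    next
      case False
      then have lt: "s ! i' < k" using si sets by (subgoal_tac "s ! i' \<in> {1..<k} \<union> {Suc k..<Suc n}") auto
      have "p j > p i" if "j \<in> {1..<i}" for j
      proof -
        from pj[OF that] show ?thesis
        proof
          assume "p j = k" then show ?thesis using lt pi' by simp
        next
          assume "\<exists>j'<i'. p j = s ! j'"
          then obtain j' where j': "j' < i'" "p j = s ! j'" by auto
          have sj: "s ! j' \<in> set s" using j' i' len by simp
          show ?thesis
          proof (cases "k < s ! j'")
            case True then show ?thesis using lt j' pi' by simp
          next
            case False
            then have "s ! j' < k" using sj sets by (subgoal_tac "s ! j' \<in> {1..<k} \<union> {Suc k..<Suc n}") auto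
            moreover have "i' < length s" using i' len by simp
            ultimately show ?thesis using L[unfolded sorted_wrt_iff_nth_less, rule_format, of j' i'] j' lt pi'
              by simp
          qed
        qed
      qed
      then show ?thesis by blast
    qed
  qed
  have "p \<in> Mnk n k" unfolding Mnk_def monotone_perm_def using perm p1 mono by blast
  then show ?thesis using ms by blast
qed



lemma bij_M:
  assumes "1 \<le> k" "k \<le> n"
  shows "bij_betw (\<lambda>p. map p [2..<Suc n]) (Mnk n k) (shuffles (rev [1..<k]) [Suc k..<Suc n])"
  unfolding bij_betw_def
proof
  show "inj_on (\<lambda>p. map p [2..<Suc n]) (Mnk n k)"
  proof (rule inj_onI)
    fix p q assume pq: "p \<in> Mnk n k" "q \<in> Mnk n k" "map p [2..<Suc n] = map q [2..<Suc n]"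
    then have pp: "p permutes {1..n}" "q permutes {1..n}" "p 1 = k" "q 1 = k"
      by (auto simp: Mnk_def monotone_perm_def)
    have eq: "p x = q x" if "x \<in> set [2..<Suc n]" for x
      using pq(3) that by (simp add: map_eq_conv)
    show "p = q"
    proof
      fix x
      show "p x = q x"
      proof (cases "x \<in> {1..n}")
        case True
        show ?thesis
        proof (cases "x = 1")
          case True then show ?thesis using pp by simp
        next
          case False
          then have "x \<in> set [2..<Suc n]" using \<open>x \<in> {1..n}\<close> by simp
          then show ?thesis by (rule eq)
        qed
      next
        case False
        then show ?thesis using pp permutes_not_in by metis
      qed
    qed
  qed
  show "(\<lambda>p. map p [2..<Suc n]) ` Mnk n k = shuffles (rev [1..<k]) [Suc k..<Suc n]"
  proof
    show "(\<lambda>p. map p [2..<Suc n]) ` Mnk n k \<subseteq> shuffles (rev [1..<k]) [Suc k..<Suc n]"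
      using fwd assms by blast
    show "shuffles (rev [1..<k]) [Suc k..<Suc n] \<subseteq> (\<lambda>p. map p [2..<Suc n]) ` Mnk n k"
    proof
      fix s assume "s \<in> shuffles (rev [1..<k]) [Suc k..<Suc n]"
      from bwd[OF this assms] obtain p where "p \<in> Mnk n k" "map p [2..<Suc n] = s" by blast
      then show "s \<in> (\<lambda>p. map p [2..<Suc n]) ` Mnk n k" by (metis imageI)
    qed
  qed
qed

lemma lam: "Lambda n = gpath [1..<Suc n]"
proof (induction n)
  case 0
  then show ?case by (simp add: Lambda_def)
next
  case (Suc n)
  show ?case
  proof (cases "n = 0")
    case True
    then show ?thesis by (simp add: Lambda_def upt_rec)
  next
    case False
    have "Lambda (Suc n) = add_mset (n, Suc n) (Lambda n)"
      using False by (simp add: Lambda_def upt_Suc_append)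
    also have "\<dots> = add_mset (n, Suc n) (gpath [1..<Suc n])" using Suc.IH by simp
    also have "\<dots> = gpath ([1..<Suc n] @ [Suc n])"
      using gpath_snoc[of "[1..<Suc n]" "Suc n"] False by simp
    also have "[1..<Suc n] @ [Suc n] = [1..<Suc (Suc n)]" by (simp add: upt_Suc_append)
    finally show ?thesis .
  qed
qed

theorem lemma4p8:
  fixes n k :: nat
  assumes "n \<ge> 2" and "2 \<le> k" and "k \<le> n"
  shows "(gvec (Lambda n) + smul ((-1) ^ k) (\<Sum>\<pi>\<in>Mnk n k. gvec (relabel \<pi> (Lambda n)))
           :: graph \<Rightarrow> 'a::field_char_0) \<in> Rspace n"
proof -
  define L where "L = rev [1..<k]"
  define Rr where "Rr = [Suc k..<Suc n]"
  define S where "S = (\<Sum>s\<in>shuffles L Rr. gvec (gpath (k#s)) :: graph \<Rightarrow> 'a)"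
  have k1: "1 \<le> k" using assms by simp
  have sumeq: "(\<Sum>\<pi>\<in>Mnk n k. gvec (relabel \<pi> (Lambda n)) :: graph \<Rightarrow> 'a) = S"
  proof -
    have "(\<Sum>\<pi>\<in>Mnk n k. gvec (relabel \<pi> (Lambda n)) :: graph \<Rightarrow> 'a)
        = (\<Sum>\<pi>\<in>Mnk n k. gvec (gpath (k # map \<pi> [2..<Suc n])))"
    proof (rule sum.cong)
      fix \<pi> assume "\<pi> \<in> Mnk n k"
      then have "\<pi> 1 = k" by (simp add: Mnk_def)
      moreover have "[1..<Suc n] = 1 # [2..<Suc n]" by (rule upt_conv_Cons[of 1 "Suc n", unfolded Suc_1]) (use assms in simp)
      ultimately show "(gvec (relabel \<pi> (Lambda n)) :: graph \<Rightarrow> 'a) = gvec (gpath (k # map \<pi> [2..<Suc n]))"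
        by (simp add: lam relabel_gpath)
    qed simp
    also have "\<dots> = S" unfolding S_def L_def Rr_def
      by (rule sum.reindex_bij_betw[OF bij_M[OF k1 assms(3)], of "\<lambda>s. gvec (gpath (k#s))"])
    finally show ?thesis .
  qed
  have split: "[1..<Suc n] = [1..<Suc k] @ Rr"
    unfolding Rr_def using upt_add_eq_append[of 1 "Suc k" "n - k"] assms by simp
  have lam2: "Lambda n = gpath [1..<Suc k] + gpath (k # Rr)"
  proof -
    have "[1..<Suc k] = [1..<k] @ [k]" using k1 by (simp add: upt_Suc_append)
    then have "[1..<Suc n] = [1..<k] @ k # Rr" using split by simp
    then show ?thesis unfolding lam using gpath_append[of "[1..<k]" k Rr] \<open>[1..<Suc k] = [1..<k] @ [k]\<close>
      by simp
  qed
  have revk: "rev [1..<Suc k] = k # L" unfolding L_def using k1 by (simp add: upt_Suc_append)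
  define c where "c = ((-1::'a) ^ (k - 1))"
  have rel_a: "(gvec (gpath (k # Rr) + gpath [1..<Suc k]) - smul c (gvec (gpath (k # Rr) + gpath (k # L)))
      :: graph \<Rightarrow> 'a) \<in> Rspace n"
  proof -
    have "is_ngraph n (gpath (k # Rr))" unfolding Rr_def using assms by (intro ng_path) auto
    moreover have "set [1..<Suc k] \<subseteq> {1..n}" using assms by (simp add: subset_iff)
    ultimately have "(gvec (gpath (k # Rr) + gpath [1..<Suc k]) - smul ((-1)^(length [1..<Suc k] - 1)) (gvec (gpath (k # Rr) + gpath (rev [1..<Suc k])))
      :: graph \<Rightarrow> 'a) \<in> Rspace n" by (intro path_rev_rel) auto
    then show ?thesis unfolding c_def revk by simp
  qed
  have rel_b: "(gvec ({#} + gpath (k # L) + gpath (k # Rr)) - S :: graph \<Rightarrow> 'a) \<in> Rspace n"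
  proof -
    have d1: "distinct (k # L @ Rr)" unfolding L_def Rr_def by simp
    have d2: "set (k # L @ Rr) \<subseteq> {1..n}" unfolding L_def Rr_def using assms by (simp add: subset_iff)
    from shuffle_rel[OF ng_empty d1 d2] show ?thesis unfolding S_def by simp
  qed
  have sgn: "(-1::'a) ^ k = - c" unfolding c_def using k1
    by (metis Suc_diff_1 less_le_trans mult_minus1 power_Suc zero_less_one)
  have "(gvec (Lambda n) + smul ((-1) ^ k) S :: graph \<Rightarrow> 'a)
      = (gvec (gpath (k # Rr) + gpath [1..<Suc k]) - smul c (gvec (gpath (k # Rr) + gpath (k # L))))
        + smul c (gvec ({#} + gpath (k # L) + gpath (k # Rr)) - S)"
    unfolding lam2 sgn by (simp add: fun_eq_iff smul_def algebra_simps add.commute)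
  then have "(gvec (Lambda n) + smul ((-1) ^ k) S :: graph \<Rightarrow> 'a) \<in> Rspace n"
    using rel_a rel_b R_add R_smul by metis
  then show ?thesis using sumeq by simp
qed

end
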